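(* Let $X\in\mathbb{R}^T$ and let $F=\{[s_m,e_m]\}_{m=1}^M$ be a collection of intervals with $1\le s_m<e_m\le T$. The set of change-point candidates (with their side information) produced by the recursive call $\textsc{WBS}(1,T,0)$ coincides with the set $\mathcal P$ produced by the non-recursive procedure described in the context (ties assumed absent). Moreover, if $(m_k)_{k=1}^{\tilde N}$ is the order in which tuples enter $\mathcal P$ in the non-recursive procedure, then the sequence $(|\tilde X_{s_{m_k},e_{m_k}}^{b_{m_k}}|)_{k=1}^{\tilde N}$ is non-increasing.
   Context: For $1\le s\le b<e\le T$ and $n=e-s+1$, the CUSUM statistic is $\tilde X_{s,e}^b=\sqrt{\frac{e-b}{n(b-s+1)}}\sum_{t=s}^b X_t-\sqrt{\frac{b-s+1}{n(e-b)}}\sum_{t=b+1}^e X_t$. Recursive WBS with threshold $\zeta$, $\textsc{WBS}(s,e,\zeta)$: if $e-s<1$ stop; otherwise let $\mathcal M_{s,e}$ be the set of indices $m$ with $[s_m,e_m]\subseteq[s,e]$; let $(m_0,b_{m_0})=\arg\max_{m\in\mathcal M_{s,e},\ b\in\{s_m,\ldots,e_m-1\}}|\tilde X_{s_m,e_m}^b|$; if $|\tilde X_{s_{m_0},e_{m_0}}^{b_{m_0}}|\ge\zeta$, record $b_{m_0}$ with side information $(m_0,s_{m_0},e_{m_0},|\tilde X_{s_{m_0},e_{m_0}}^{b_{m_0}}|)$ and call $\textsc{WBS}(s,b_{m_0},\zeta)$ and $\textsc{WBS}(b_{m_0}+1,e,\zeta)$; otherwise stop. (If $\mathcal M_{s,e}=\emptyset$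 nothing is recorded.) Non-recursive procedure: for each $m$ let $b_m=\arg\max_{b\in\{s_m,\ldots,e_m-1\}}|\tilde X_{s_m,e_m}^b|$. Initialise $\mathcal C=\{(m,s_m,e_m,b_m,|\tilde X_{s_m,e_m}^{b_m}|):m=1,\ldots,M\}$, $\mathcal P=\emptyset$. While $\mathcal C\ne\emptyset$: let $m_0$ maximise $|\tilde X_{s_m,e_m}^{b_m}|$ over tuples in $\mathcal C$, add its tuple to $\mathcal P$, and remove from $\mathcal C$ all tuples with $s_m\le b_{m_0}<e_m$. *)

theory Defs
  imports Complex_Main
begin

text \<open>Data X :: nat => real (only X 1, ..., X T matter); intervals [ss m, ee m], m = 1..M.\<close>

definition cusum :: "(nat \<Rightarrow> real) \<Rightarrow> nat \<Rightarrow> nat \<Rightarrow> nat \<Rightarrow> real" where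
  "cusum X s b e =
     (let n = real (e - s + 1) in
        sqrt (real (e - b) / (n * real (b - s + 1))) * (\<Sum>t=s..b. X t)
      - sqrt (real (b - s + 1) / (n * real (e - b))) * (\<Sum>t=Suc b..e. X t))"

definition cval :: "(nat \<Rightarrow> real) \<Rightarrow> (nat \<Rightarrow> nat) \<Rightarrow> (nat \<Rightarrow> nat) \<Rightarrow> nat \<Rightarrow> nat \<Rightarrow> real" where
  "cval X ss ee m b = \<bar>cusum X (ss m) b (ee m)\<bar>"

text \<open>Tuples (m, s_m, e_m, b, |value|).\<close>
type_synonym tup = "nat \<times> nat \<times> nat \<times> nat \<times> real"

definition tup_val :: "tup \<Rightarrow> real" where "tup_val t = snd (snd (snd (snd t)))"
definition tup_s :: "tup \<Rightarrow> nat" where "tup_s t = fst (snd t)"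
definition tup_e :: "tup \<Rightarrow> nat" where "tup_e t = fst (snd (snd t))"
definition tup_b :: "tup \<Rightarrow> nat" where "tup_b t = fst (snd (snd (snd t)))"

definition wbs_cands :: "(nat \<Rightarrow> nat) \<Rightarrow> (nat \<Rightarrow> nat) \<Rightarrow> nat \<Rightarrow> nat \<Rightarrow> nat \<Rightarrow> (nat \<times> nat) set" where
  "wbs_cands ss ee M s e =
     {(m, b). m \<in> {1..M} \<and> s \<le> ss m \<and> ee m \<le> e \<and> ss m \<le> b \<and> b < ee m}"

text \<open>The argmax (m0, b0); unique under the no-ties assumption.\<close>
definition wbs_choice :: "(nat \<Rightarrow> real) \<Rightarrow> (nat \<Rightarrow> nat) \<Rightarrow> (nat \<Rightarrow> nat) \<Rightarrow> nat \<Rightarrow> nat \<Rightarrow> nat \<Rightarrow> nat \<times> nat" where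
  "wbs_choice X ss ee M s e =
     (SOME p. is_arg_max (\<lambda>(m, b). cval X ss ee m b) (\<lambda>p. p \<in> wbs_cands ss ee M s e) p)"

text \<open>Recursive WBS(s,e,zeta): returns the set of recorded tuples.
  The guard s <= b0 < e is always true when the candidate set is nonempty;
  it only makes termination evident.\<close>
function wbs :: "(nat \<Rightarrow> real) \<Rightarrow> (nat \<Rightarrow> nat) \<Rightarrow> (nat \<Rightarrow> nat) \<Rightarrow> nat \<Rightarrow> real \<Rightarrow> nat \<Rightarrow> nat \<Rightarrow> tup set" where
  "wbs X ss ee M \<zeta> s e =
     (if e - s < 1 \<or> wbs_cands ss ee M s e = {} then {}
      else (let (m0, b0) = wbs_choice X ss ee M s e in
            if cval X ss ee m0 b0 \<ge> \<zeta> \<and> s \<le> b0 \<and> b0 < e then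
              insert (m0, ss m0, ee m0, b0, cval X ss ee m0 b0)
                (wbs X ss ee M \<zeta> s b0 \<union> wbs X ss ee M \<zeta> (Suc b0) e)
            else {}))"
  by pat_completeness auto
termination
  by (relation "measure (\<lambda>(X, ss, ee, M, \<zeta>, s, e). e - s)") auto

definition best_split :: "(nat \<Rightarrow> real) \<Rightarrow> (nat \<Rightarrow> nat) \<Rightarrow> (nat \<Rightarrow> nat) \<Rightarrow> nat \<Rightarrow> nat" where
  "best_split X ss ee m =
     (SOME b. is_arg_max (\<lambda>b. cval X ss ee m b) (\<lambda>b. b \<in> {ss m..<ee m}) b)"

definition init_cands :: "(nat \<Rightarrow> real) \<Rightarrow> (nat \<Rightarrow> nat) \<Rightarrow> (nat \<Rightarrow> nat) \<Rightarrow> nat \<Rightarrow> tup set" where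
  "init_cands X ss ee M =
     (\<lambda>m. (m, ss m, ee m, best_split X ss ee m, cval X ss ee m (best_split X ss ee m))) ` {1..M}"

definition pick_max :: "tup set \<Rightarrow> tup" where
  "pick_max C = (SOME t. is_arg_max tup_val (\<lambda>t. t \<in> C) t)"

text \<open>Main loop; returns P as a list in order of insertion. Guard ensures
  termination (it holds automatically for the candidate sets used).\<close>
function nonrec_loop :: "tup set \<Rightarrow> tup list" where
  "nonrec_loop C =
     (if C = {} \<or> infinite C then []
      else (let t = pick_max C in
            if t \<in> C \<and> tup_s t \<le> tup_b t \<and> tup_b t < tup_e t then
              t # nonrec_loop (C - {u \<in> C. tup_s u \<le> tup_b t \<and> tup_b t < tup_e u})
            else []))"
  by pat_completeness auto
termination
proof (relation "measure card")
  fix C :: "tup set" and t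
  assume "\<not> (C = {} \<or> infinite C)" "t = pick_max C"
     "t \<in> C \<and> tup_s t \<le> tup_b t \<and> tup_b t < tup_e t"
  then show "(C - {u \<in> C. tup_s u \<le> tup_b t \<and> tup_b t < tup_e u}, C) \<in> measure card"
    by (auto intro!: psubset_card_mono)
qed auto

definition nonrec_wbs :: "(nat \<Rightarrow> real) \<Rightarrow> (nat \<Rightarrow> nat) \<Rightarrow> (nat \<Rightarrow> nat) \<Rightarrow> nat \<Rightarrow> tup list" where
  "nonrec_wbs X ss ee M = nonrec_loop (init_cands X ss ee M)"

end

theory Submission
  imports Defs
begin

declare nonrec_loop.simps[simp del] wbs.simps[simp del]

lemma argmax_some:
  fixes f :: "'a \<Rightarrow> 'b::linorder"
  assumes "finite A" "A \<noteq> {}"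
  shows "(SOME x. is_arg_max f (\<lambda>x. x \<in> A) x) \<in> A \<and>
         (\<forall>y\<in>A. f y \<le> f (SOME x. is_arg_max f (\<lambda>x. x \<in> A) x))"
proof -
  have fin: "finite (f ` A)" using assms by simp
  have "Max (f ` A) \<in> f ` A" using assms by simp
  then obtain x where x: "x \<in> A" "f x = Max (f ` A)" by auto
  have "\<forall>y\<in>A. f y \<le> f x" using x fin by simp
  hence "is_arg_max f (\<lambda>x. x \<in> A) x" using x unfolding is_arg_max_def by (auto simp: not_less)
  hence "is_arg_max f (\<lambda>x. x \<in> A) (SOME x. is_arg_max f (\<lambda>x. x \<in> A) x)" by (rule someI)
  thus ?thesis unfolding is_arg_max_def by (auto simp: not_less)
qed

definition Valid :: "tup set \<Rightarrow> bool" where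
  "Valid C \<longleftrightarrow> finite C \<and> (\<forall>t\<in>C. tup_s t \<le> tup_b t \<and> tup_b t < tup_e t) \<and> inj_on tup_val C"

lemma Valid_subset: "Valid C \<Longrightarrow> C' \<subseteq> C \<Longrightarrow> Valid C'"
  unfolding Valid_def by (meson finite_subset inj_on_subset subsetD)

lemma pick_props:
  assumes "Valid C" "C \<noteq> {}"
  shows "pick_max C \<in> C \<and> (\<forall>u\<in>C. tup_val u \<le> tup_val (pick_max C))"
  using argmax_some[of C tup_val] assms unfolding pick_max_def Valid_def by auto

lemma pick_unique:
  assumes "Valid C" "t \<in> C" "\<forall>u\<in>C. tup_val u \<le> tup_val t"
  shows "pick_max C = t"
proof -
  have "pick_max C \<in> C" "tup_val t \<le> tup_val (pick_max C)"
    using pick_props[of C] assms by auto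
  moreover have "tup_val (pick_max C) \<le> tup_val t" using assms calculation by auto
  ultimately show ?thesis using assms(1,2) unfolding Valid_def by (meson antisym inj_onD)
qed

lemma loop_empty: "nonrec_loop {} = []"
  by (subst nonrec_loop.simps) simp

lemma loop_unfold:
  assumes "Valid C" "C \<noteq> {}"
  shows "nonrec_loop C = pick_max C # nonrec_loop (C - {u \<in> C. tup_s u \<le> tup_b (pick_max C) \<and> tup_b (pick_max C) < tup_e u})"
proof -
  have "pick_max C \<in> C" using pick_props assms by auto
  hence "tup_s (pick_max C) \<le> tup_b (pick_max C) \<and> tup_b (pick_max C) < tup_e (pick_max C)"
    using assms unfolding Valid_def by auto
  moreover have "finite C" using assms unfolding Valid_def by auto
  ultimately show ?thesis using assms \<open>pick_max C \<in> C\<close>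
    by (subst nonrec_loop.simps) (simp add: Let_def)
qed

lemma loop_subset: "Valid C \<Longrightarrow> set (nonrec_loop C) \<subseteq> C"
proof (induction C rule: nonrec_loop.induct)
  case (1 C)
  show ?case
  proof (cases "C = {}")
    case True thus ?thesis by (simp add: loop_empty)
  next
    case False
    let ?C' = "C - {u \<in> C. tup_s u \<le> tup_b (pick_max C) \<and> tup_b (pick_max C) < tup_e u}"
    have v: "Valid ?C'" using Valid_subset[OF "1.prems"] by blast
    have fin: "\<not> (C = {} \<or> infinite C)" using False "1.prems" unfolding Valid_def by auto
    have p: "pick_max C \<in> C \<and> tup_s (pick_max C) \<le> tup_b (pick_max C) \<and> tup_b (pick_max C) < tup_e (pick_max C)"
      using pick_props[OF "1.prems" False] "1.prems" unfolding Valid_def by auto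
    have "set (nonrec_loop ?C') \<subseteq> ?C'" using "1.IH"[OF fin refl p v] .
    thus ?thesis using loop_unfold[OF "1.prems" False] p by auto
  qed
qed

lemma loop_mono: "Valid C \<Longrightarrow> \<forall>k. Suc k < length (nonrec_loop C) \<longrightarrow>
   tup_val (nonrec_loop C ! Suc k) \<le> tup_val (nonrec_loop C ! k)"
proof (induction C rule: nonrec_loop.induct)
  case (1 C)
  show ?case
  proof (cases "C = {}")
    case True thus ?thesis by (simp add: loop_empty)
  next
    case False
    let ?C' = "C - {u \<in> C. tup_s u \<le> tup_b (pick_max C) \<and> tup_b (pick_max C) < tup_e u}"
    have v: "Valid ?C'" using Valid_subset[OF "1.prems"] by blast
    have fin: "\<not> (C = {} \<or> infinite C)" using False "1.prems" unfolding Valid_def by auto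
    have pp: "pick_max C \<in> C \<and> (\<forall>u\<in>C. tup_val u \<le> tup_val (pick_max C))"
      using pick_props[OF "1.prems" False] by auto
    have p: "pick_max C \<in> C \<and> tup_s (pick_max C) \<le> tup_b (pick_max C) \<and> tup_b (pick_max C) < tup_e (pick_max C)"
      using pp "1.prems" unfolding Valid_def by auto
    have IH: "\<forall>k. Suc k < length (nonrec_loop ?C') \<longrightarrow>
   tup_val (nonrec_loop ?C' ! Suc k) \<le> tup_val (nonrec_loop ?C' ! k)" using "1.IH"[OF fin refl p v] .
    have sub: "set (nonrec_loop ?C') \<subseteq> C" using loop_subset[OF v] by auto
    show ?thesis
    proof (intro allI impI)
      fix k assume k: "Suc k < length (nonrec_loop C)"
      show "tup_val (nonrec_loop C ! Suc k) \<le> tup_val (nonrec_loop C ! k)"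
      proof (cases k)
        case 0
        have "nonrec_loop ?C' ! 0 \<in> set (nonrec_loop ?C')"
          using k 0 loop_unfold[OF "1.prems" False] by auto
        thus ?thesis using 0 sub pp loop_unfold[OF "1.prems" False] by auto
      next
        case (Suc j)
        thus ?thesis using IH k loop_unfold[OF "1.prems" False] by auto
      qed
    qed
  qed
qed

definition NI :: "tup set \<Rightarrow> tup set \<Rightarrow> bool" where
  "NI A B \<longleftrightarrow> (\<forall>a\<in>A. \<forall>b\<in>B. \<not> (tup_s b \<le> tup_b a \<and> tup_b a < tup_e b)
                               \<and> \<not> (tup_s a \<le> tup_b b \<and> tup_b b < tup_e a))"

lemma NI_sym: "NI A B \<Longrightarrow> NI B A" unfolding NI_def by blast

lemma NI_subset: "NI A B \<Longrightarrow> A' \<subseteq> A \<Longrightarrow> B' \<subseteq> B \<Longrightarrow> NI A' B'" unfolding NI_def by blast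

lemma union_step:
  assumes V: "Valid (A \<union> B)" and N: "NI A B" and ne: "A \<union> B \<noteq> {}"
    and tA: "pick_max (A \<union> B) \<in> A"
    and IH: "\<And>A' B'. card (A' \<union> B') < card (A \<union> B) \<Longrightarrow> Valid (A' \<union> B') \<Longrightarrow> NI A' B' \<Longrightarrow>
               set (nonrec_loop (A' \<union> B')) = set (nonrec_loop A') \<union> set (nonrec_loop B')"
  shows "set (nonrec_loop (A \<union> B)) = set (nonrec_loop A) \<union> set (nonrec_loop B)"
proof -
  define t where "t = pick_max (A \<union> B)"
  have pp: "\<forall>u\<in>A \<union> B. tup_val u \<le> tup_val t" using pick_props[OF V ne] t_def by auto
  have VA: "Valid A" using Valid_subset[OF V] by blast
  have tA': "t \<in> A" using tA t_def by simp
  have pA: "pick_max A = t" using pick_unique[OF VA tA'] pp by auto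
  have tv: "tup_s t \<le> tup_b t \<and> tup_b t < tup_e t" using V tA' unfolding Valid_def by auto
  define RA where "RA = {u \<in> A. tup_s u \<le> tup_b t \<and> tup_b t < tup_e u}"
  have nb: "\<forall>u\<in>B. \<not> (tup_s u \<le> tup_b t \<and> tup_b t < tup_e u)"
    using N tA' unfolding NI_def by blast
  have RB: "{u \<in> A \<union> B. tup_s u \<le> tup_b t \<and> tup_b t < tup_e u} = RA"
    using nb unfolding RA_def by blast
  have eq: "(A \<union> B) - RA = (A - RA) \<union> B"
    using nb unfolding RA_def by blast
  have l1: "nonrec_loop (A \<union> B) = t # nonrec_loop ((A - RA) \<union> B)"
    using loop_unfold[OF V ne, folded t_def] unfolding RB eq .
  have l2: "nonrec_loop A = t # nonrec_loop (A - RA)"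
  proof -
    have "A \<noteq> {}" using tA' by auto
    from loop_unfold[OF VA this] show ?thesis unfolding pA RA_def .
  qed
  have tnB: "t \<notin> B" using nb tv by blast
  have tRA: "t \<in> RA" using tA' tv unfolding RA_def by blast
  have fin: "finite (A \<union> B)" using V unfolding Valid_def by blast
  have sub: "(A - RA) \<union> B \<subseteq> (A \<union> B) - {t}" using tnB tRA by blast
  have "card ((A - RA) \<union> B) \<le> card ((A \<union> B) - {t})"
    by (rule card_mono) (use fin sub in auto)
  moreover have "card ((A \<union> B) - {t}) < card (A \<union> B)"
    by (rule card_Diff1_less[OF fin]) (use tA' in blast)
  ultimately have c: "card ((A - RA) \<union> B) < card (A \<union> B)" by (rule le_less_trans)
  have V2: "Valid ((A - RA) \<union> B)" by (rule Valid_subset[OF V]) blast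
  have N2: "NI (A - RA) B" by (rule NI_subset[OF N]) blast+
  have "set (nonrec_loop ((A - RA) \<union> B)) = set (nonrec_loop (A - RA)) \<union> set (nonrec_loop B)"
    by (rule IH[OF c V2 N2])
  thus ?thesis using l1 l2 by auto
qed

lemma union_loop:
  "Valid (A \<union> B) \<Longrightarrow> NI A B \<Longrightarrow> set (nonrec_loop (A \<union> B)) = set (nonrec_loop A) \<union> set (nonrec_loop B)"
proof (induction "card (A \<union> B)" arbitrary: A B rule: less_induct)
  case less
  show ?case
  proof (cases "A \<union> B = {}")
    case True thus ?thesis by (simp add: loop_empty)
  next
    case False
    have "pick_max (A \<union> B) \<in> A \<union> B" using pick_props[OF less.prems(1) False] by auto
    moreover
    { assume "pick_max (A \<union> B) \<in> A"
      hence ?thesis using union_step[OF less.prems False] less.hyps by blast }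
    moreover
    { assume b: "pick_max (A \<union> B) \<in> B"
      have V': "Valid (B \<union> A)" using less.prems(1) by (simp add: Un_commute)
      have "set (nonrec_loop (B \<union> A)) = set (nonrec_loop B) \<union> set (nonrec_loop A)"
        apply (rule union_step[OF V' NI_sym[OF less.prems(2)]])
        using False b less.hyps by (auto simp: Un_commute)
      hence ?thesis by (auto simp: Un_commute) }
    ultimately show ?thesis by blast
  qed
qed


definition tupm :: "(nat \<Rightarrow> real) \<Rightarrow> (nat \<Rightarrow> nat) \<Rightarrow> (nat \<Rightarrow> nat) \<Rightarrow> nat \<Rightarrow> tup" where
  "tupm X ss ee m = (m, ss m, ee m, best_split X ss ee m, cval X ss ee m (best_split X ss ee m))"

definition SI :: "(nat \<Rightarrow> nat) \<Rightarrow> (nat \<Rightarrow> nat) \<Rightarrow> nat \<Rightarrow> nat \<Rightarrow> nat \<Rightarrow> nat set" where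
  "SI ss ee M s e = {m \<in> {1..M}. s \<le> ss m \<and> ee m \<le> e}"

lemma tupm_simps[simp]:
  "tup_s (tupm X ss ee m) = ss m" "tup_e (tupm X ss ee m) = ee m"
  "tup_b (tupm X ss ee m) = best_split X ss ee m"
  "tup_val (tupm X ss ee m) = cval X ss ee m (best_split X ss ee m)"
  unfolding tupm_def tup_s_def tup_e_def tup_b_def tup_val_def by simp_all

lemma tupm_inj: "tupm X ss ee m = tupm X ss ee m' \<Longrightarrow> m = m'"
  unfolding tupm_def by simp

context
  fixes X :: "nat \<Rightarrow> real" and ss ee :: "nat \<Rightarrow> nat" and M T :: nat
  assumes intervals: "\<forall>m\<in>{1..M}. 1 \<le> ss m \<and> ss m < ee m \<and> ee m \<le> T"
    and no_ties: "\<forall>m\<in>{1..M}. \<forall>b\<in>{ss m..<ee m}. \<forall>m'\<in>{1..M}. \<forall>b'\<in>{ss m'..<ee m'}.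
                    (m, b) \<noteq> (m', b') \<longrightarrow> cval X ss ee m b \<noteq> cval X ss ee m' b'"
begin

lemma bm_props:
  assumes m: "m \<in> {1..M}"
  shows "best_split X ss ee m \<in> {ss m..<ee m} \<and>
         (\<forall>b\<in>{ss m..<ee m}. cval X ss ee m b \<le> cval X ss ee m (best_split X ss ee m))"
proof -
  have "{ss m..<ee m} \<noteq> {}" using intervals m by auto
  thus ?thesis using argmax_some[of "{ss m..<ee m}" "cval X ss ee m"]
    unfolding best_split_def by simp
qed

lemma Valid_tupm: "S \<subseteq> {1..M} \<Longrightarrow> Valid (tupm X ss ee ` S)"
  unfolding Valid_def
proof (intro conjI)
  assume S: "S \<subseteq> {1..M}"
  hence "finite S" using finite_subset by blast
  thus "finite (tupm X ss ee ` S)" by simp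
  show "\<forall>t\<in>tupm X ss ee ` S. tup_s t \<le> tup_b t \<and> tup_b t < tup_e t"
    using bm_props S by fastforce
  show "inj_on tup_val (tupm X ss ee ` S)"
  proof (rule inj_onI)
    fix x y assume x: "x \<in> tupm X ss ee ` S" and y: "y \<in> tupm X ss ee ` S" and v: "tup_val x = tup_val y"
    obtain m where m: "m \<in> S" "x = tupm X ss ee m" using x by blast
    obtain m' where m': "m' \<in> S" "y = tupm X ss ee m'" using y by blast
    show "x = y"
    proof (rule ccontr)
      assume "x \<noteq> y"
      hence "m \<noteq> m'" using m m' by blast
      moreover have "m \<in> {1..M}" "m' \<in> {1..M}" using m m' S by auto
      ultimately have "cval X ss ee m (best_split X ss ee m) \<noteq> cval X ss ee m' (best_split X ss ee m')"
        using no_ties bm_props by blast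
      thus False using v m m' by simp
    qed
  qed
qed

lemma wbs_eq: "set (nonrec_loop (tupm X ss ee ` SI ss ee M s e)) = wbs X ss ee M 0 s e"
proof (induction "e - s" arbitrary: s e rule: less_induct)
  case less
  show ?case
  proof (cases "SI ss ee M s e = {}")
    case True
    have "wbs_cands ss ee M s e = {}" using True unfolding wbs_cands_def SI_def by auto
    hence "wbs X ss ee M 0 s e = {}" by (subst wbs.simps) simp
    thus ?thesis using True by (simp add: loop_empty)
  next
    case False
    then obtain m1 where m1: "m1 \<in> SI ss ee M s e" by blast
    have m1i: "m1 \<in> {1..M}" "s \<le> ss m1" "ee m1 \<le> e" using m1 unfolding SI_def by auto
    have se: "\<not> e - s < 1" using m1i intervals by fastforce
    have cne: "wbs_cands ss ee M s e \<noteq> {}"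
      using m1i intervals unfolding wbs_cands_def by fastforce
    have cfin: "finite (wbs_cands ss ee M s e)"
      by (rule finite_subset[of _ "{1..M} \<times> {..e}"]) (auto simp: wbs_cands_def)
    obtain m0 b0 where ch: "wbs_choice X ss ee M s e = (m0, b0)" by fastforce
    have chp: "(m0, b0) \<in> wbs_cands ss ee M s e \<and>
       (\<forall>y\<in>wbs_cands ss ee M s e. (\<lambda>(m, b). cval X ss ee m b) y \<le> cval X ss ee m0 b0)"
      using argmax_some[OF cfin cne, of "\<lambda>(m, b). cval X ss ee m b"] ch
      unfolding wbs_choice_def by simp
    have m0: "m0 \<in> {1..M}" "s \<le> ss m0" "ee m0 \<le> e" "ss m0 \<le> b0" "b0 < ee m0"
      using chp unfolding wbs_cands_def by auto
    have m0S: "m0 \<in> SI ss ee M s e" using m0 unfolding SI_def by auto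
    have maxc: "\<And>m b. (m, b) \<in> wbs_cands ss ee M s e \<Longrightarrow> cval X ss ee m b \<le> cval X ss ee m0 b0"
      using chp by fastforce
    have bmS: "\<And>m. m \<in> SI ss ee M s e \<Longrightarrow> (m, best_split X ss ee m) \<in> wbs_cands ss ee M s e"
      using bm_props unfolding SI_def wbs_cands_def by fastforce
    have b0eq: "b0 = best_split X ss ee m0"
    proof (rule ccontr)
      assume ne: "b0 \<noteq> best_split X ss ee m0"
      have "cval X ss ee m0 (best_split X ss ee m0) \<le> cval X ss ee m0 b0"
        using maxc bmS m0S by blast
      moreover have "cval X ss ee m0 b0 \<le> cval X ss ee m0 (best_split X ss ee m0)"
        using bm_props[OF m0(1)] m0 by auto
      moreover have "cval X ss ee m0 b0 \<noteq> cval X ss ee m0 (best_split X ss ee m0)"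
      proof -
        have bsin: "best_split X ss ee m0 \<in> {ss m0..<ee m0}" using bm_props[OF m0(1)] by blast
        have b0in: "b0 \<in> {ss m0..<ee m0}" using m0 by simp
        have "(m0, b0) \<noteq> (m0, best_split X ss ee m0)" using ne by simp
        thus ?thesis by (rule no_ties[rule_format, OF m0(1) b0in m0(1) bsin])
      qed
      ultimately show False by linarith
    qed
    have cv0: "0 \<le> cval X ss ee m0 b0" unfolding cval_def by simp
    have w: "wbs X ss ee M 0 s e = insert (tupm X ss ee m0) (wbs X ss ee M 0 s b0 \<union> wbs X ss ee M 0 (Suc b0) e)"
      apply (subst wbs.simps)
      using se cne ch cv0 m0 b0eq by (simp add: tupm_def)
    let ?C = "tupm X ss ee ` SI ss ee M s e"
    have SIsub: "\<And>s e. SI ss ee M s e \<subseteq> {1..M}" unfolding SI_def by auto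
    have VC: "Valid ?C" by (rule Valid_tupm[OF SIsub])
    have Cne: "?C \<noteq> {}" using False by simp
    have pk: "pick_max ?C = tupm X ss ee m0"
    proof (rule pick_unique[OF VC])
      show "tupm X ss ee m0 \<in> ?C" using m0S by simp
      show "\<forall>u\<in>?C. tup_val u \<le> tup_val (tupm X ss ee m0)"
        using maxc bmS b0eq by fastforce
    qed
    have rem: "?C - {u \<in> ?C. tup_s u \<le> tup_b (pick_max ?C) \<and> tup_b (pick_max ?C) < tup_e u}
          = tupm X ss ee ` SI ss ee M s b0 \<union> tupm X ss ee ` SI ss ee M (Suc b0) e"
    proof -
      have r1: "?C - {u \<in> ?C. tup_s u \<le> b0 \<and> b0 < tup_e u}
         = tupm X ss ee ` {m \<in> SI ss ee M s e. \<not> (ss m \<le> b0 \<and> b0 < ee m)}" by auto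
      have r2: "{m \<in> SI ss ee M s e. \<not> (ss m \<le> b0 \<and> b0 < ee m)} = SI ss ee M s b0 \<union> SI ss ee M (Suc b0) e"
        using m0 unfolding SI_def by auto
      show ?thesis unfolding pk tupm_simps b0eq[symmetric] r1 r2 image_Un ..
    qed
    have l: "nonrec_loop ?C = tupm X ss ee m0 #
        nonrec_loop (tupm X ss ee ` SI ss ee M s b0 \<union> tupm X ss ee ` SI ss ee M (Suc b0) e)"
      apply (subst loop_unfold[OF VC Cne]) apply (subst rem) by (simp add: pk)
    have V2: "Valid (tupm X ss ee ` SI ss ee M s b0 \<union> tupm X ss ee ` SI ss ee M (Suc b0) e)"
      unfolding image_Un[symmetric] by (rule Valid_tupm) (use SIsub in blast)
    have N2: "NI (tupm X ss ee ` SI ss ee M s b0) (tupm X ss ee ` SI ss ee M (Suc b0) e)"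
      unfolding NI_def
    proof (intro ballI)
      fix a b assume a: "a \<in> tupm X ss ee ` SI ss ee M s b0" and b: "b \<in> tupm X ss ee ` SI ss ee M (Suc b0) e"
      obtain m where m: "m \<in> SI ss ee M s b0" "a = tupm X ss ee m" using a by blast
      obtain m' where m': "m' \<in> SI ss ee M (Suc b0) e" "b = tupm X ss ee m'" using b by blast
      have "best_split X ss ee m < ee m" "ee m \<le> b0" "Suc b0 \<le> ss m'" "ss m' \<le> best_split X ss ee m'"
        using m m' bm_props unfolding SI_def by auto
      thus "\<not> (tup_s b \<le> tup_b a \<and> tup_b a < tup_e b) \<and> \<not> (tup_s a \<le> tup_b b \<and> tup_b b < tup_e a)"
        using m m' by simp
    qed
    have IH1: "set (nonrec_loop (tupm X ss ee ` SI ss ee M s b0)) = wbs X ss ee M 0 s b0"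
      by (rule less) (use m0 in simp)
    have IH2: "set (nonrec_loop (tupm X ss ee ` SI ss ee M (Suc b0) e)) = wbs X ss ee M 0 (Suc b0) e"
      by (rule less) (use m0 in simp)
    show ?thesis using l w union_loop[OF V2 N2] IH1 IH2 by simp
  qed
qed

lemma main_aux:
  "wbs X ss ee M 0 1 T = set (nonrec_wbs X ss ee M)
       \<and> (\<forall>k. Suc k < length (nonrec_wbs X ss ee M) \<longrightarrow>
              tup_val (nonrec_wbs X ss ee M ! Suc k) \<le> tup_val (nonrec_wbs X ss ee M ! k))"
proof -
  have S: "SI ss ee M 1 T = {1..M}" using intervals unfolding SI_def by auto
  have I: "init_cands X ss ee M = tupm X ss ee ` {1..M}"
    unfolding init_cands_def tupm_def by simp
  have V: "Valid (init_cands X ss ee M)" unfolding I by (rule Valid_tupm) simp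
  show ?thesis using wbs_eq[of 1 T] loop_mono[OF V] unfolding nonrec_wbs_def I S by simp
qed

end

theorem mainTheorem8:
  fixes X :: "nat \<Rightarrow> real" and ss ee :: "nat \<Rightarrow> nat" and M T :: nat
  assumes intervals: "\<forall>m\<in>{1..M}. 1 \<le> ss m \<and> ss m < ee m \<and> ee m \<le> T"
    and no_ties: "\<forall>m\<in>{1..M}. \<forall>b\<in>{ss m..<ee m}. \<forall>m'\<in>{1..M}. \<forall>b'\<in>{ss m'..<ee m'}.
                    (m, b) \<noteq> (m', b') \<longrightarrow> cval X ss ee m b \<noteq> cval X ss ee m' b'"
  shows "wbs X ss ee M 0 1 T = set (nonrec_wbs X ss ee M)
       \<and> (\<forall>k. Suc k < length (nonrec_wbs X ss ee M) \<longrightarrow>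
              tup_val (nonrec_wbs X ss ee M ! Suc k) \<le> tup_val (nonrec_wbs X ss ee M ! k))"
  using main_aux[OF intervals no_ties] .

end
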